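(* Let $M$ and $M+H$ be $n\times n$ real symmetric matrices, each of whose eigenvalues have pairwise distinct absolute values. Let $\lambda_1,\dots,\lambda_n$ be the spectrum of $M$ with $|\lambda_1|>\dots>|\lambda_n|$, and $\nu_1,\dots,\nu_n$ the spectrum of $M+H$ with $|\nu_1|>\dots>|\nu_n|$. For each $i$ let $u_i,v_i$ be eigenvectors with $Mu_i=\lambda_iu_i$ and $(M+H)v_i=\nu_iv_i$, and let $\theta_i$ be the angle between the lines spanned by $u_i$ and $v_i$. Let $\varepsilon:=\|H\|$ be the spectral norm of $H$. Then for all $i\in\{1,\dots,n\}$: (i) $|\lambda_i^2-\nu_i^2|\le\varepsilon(\varepsilon+2|\lambda_1|)$; (ii) $\sin\theta_i\le\varepsilon(\varepsilon+2|\lambda_1|)/\Delta_i$, where $\Delta_i=\min\{|\lambda_i^2-\nu_j^2|: j=1,\dots,n,\ j\ne i\}$.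
   Context: The spectral norm $\|H\|$ of a real symmetric matrix is the maximal absolute value of its eigenvalues. *)

theory Defs
  imports "HOL-Analysis.Analysis"
begin

definition eigenvalues :: "real^'n^'n \<Rightarrow> real set" where
  "eigenvalues A = {c. \<exists>x. x \<noteq> 0 \<and> A *v x = c *s x}"

text \<open>Spectral norm of a real symmetric matrix: maximal absolute value of its eigenvalues.\<close>
definition spectral_norm :: "real^'n^'n \<Rightarrow> real" where
  "spectral_norm A = Max (abs ` eigenvalues A)"

definition line_angle :: "real^'n \<Rightarrow> real^'n \<Rightarrow> real" where
  "line_angle x y = arccos (\<bar>x \<bullet> y\<bar> / (norm x * norm y))"

end

theory Submission
  imports Defs
begin

lemma inner_expand:
  fixes a b :: "'a::real_inner"
  shows "(a + t *\<^sub>R b) \<bullet> (a + t *\<^sub>R b) = a \<bullet> a + 2 * t * (a \<bullet> b) + t ^ 2 * (b \<bullet> b)"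
proof -
  have "(a + t *\<^sub>R b) \<bullet> (a + t *\<^sub>R b) = a \<bullet> a + t * (a \<bullet> b) + t * (b \<bullet> a) + t * t * (b \<bullet> b)"
    by (simp add: inner_add_left inner_add_right algebra_simps)
  then show ?thesis by (simp add: inner_commute[of b a] power2_eq_square)
qed


lemma dimcart: "DIM(real^'n) = CARD('n)" by simp

lemma sym_dot:
  fixes A :: "real^'n^'n"
  assumes "transpose A = A"
  shows "(A *v x) \<bullet> y = x \<bullet> (A *v y)"
proof -
  have "A *v x = x v* A" using transpose_matrix_vector[of A x] assms by simp
  then show ?thesis by (simp add: dot_lmul_matrix)
qed

lemma sym_orth:
  fixes A :: "real^'n^'n"
  assumes "transpose A = A" "A *v x = a *s x" "A *v y = b *s y" "a \<noteq> b"
  shows "x \<bullet> y = 0"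
proof -
  have "a * (x \<bullet> y) = (A *v x) \<bullet> y" using assms(2) by (simp add: scalar_mult_eq_scaleR)
  also have "\<dots> = x \<bullet> (A *v y)" by (rule sym_dot[OF assms(1)])
  also have "\<dots> = b * (x \<bullet> y)" using assms(3) by (simp add: scalar_mult_eq_scaleR)
  finally show ?thesis using assms(4) by simp
qed

lemma parseval:
  fixes u :: "nat \<Rightarrow> real^'n"
  assumes nz: "\<And>j. 1 \<le> j \<Longrightarrow> j \<le> CARD('n) \<Longrightarrow> u j \<noteq> 0"
    and orth: "\<And>i j. 1 \<le> i \<Longrightarrow> i \<le> CARD('n) \<Longrightarrow> 1 \<le> j \<Longrightarrow> j \<le> CARD('n) \<Longrightarrow> i \<noteq> j \<Longrightarrow> u i \<bullet> u j = 0"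
  shows "y \<bullet> y = (\<Sum>j=1..CARD('n). (y \<bullet> u j)\<^sup>2 / (u j \<bullet> u j))"
proof -
  let ?n = "CARD('n)"
  let ?S = "u ` {1..?n}"
  have inj: "inj_on u {1..?n}"
  proof (rule inj_onI)
    fix i j assume "i \<in> {1..?n}" "j \<in> {1..?n}" "u i = u j"
    then show "i = j" using nz orth[of i j] by force
  qed
  have card: "card ?S = ?n" using inj by (simp add: card_image)
  have po: "pairwise orthogonal ?S"
    unfolding pairwise_def orthogonal_def using orth by fastforce
  have "0 \<notin> ?S" using nz by force
  then have ind: "independent ?S" using po pairwise_orthogonal_independent by blast
  have sp: "UNIV \<subseteq> span ?S"
    by (rule card_ge_dim_independent) (use ind card in auto)
  define c where "c j = (y \<bullet> u j) / (u j \<bullet> u j)" for j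
  define z where "z = y - (\<Sum>j=1..?n. c j *\<^sub>R u j)"
  have zo: "z \<bullet> u k = 0" if k: "k \<in> {1..?n}" for k
  proof -
    have "(\<Sum>j=1..?n. c j *\<^sub>R u j) \<bullet> u k = (\<Sum>j=1..?n. c j * (u j \<bullet> u k))"
      by (simp add: inner_sum_left)
    also have "\<dots> = c k * (u k \<bullet> u k)"
      by (subst sum.remove[OF finite_atLeastAtMost k]) (use orth k in \<open>auto intro!: sum.neutral\<close>)
    also have "\<dots> = y \<bullet> u k" using nz k by (simp add: c_def)
    finally show ?thesis by (simp add: z_def inner_diff_left)
  qed
  have "orthogonal z z"
    by (rule orthogonal_to_span[of z ?S]) (use sp zo in \<open>auto simp: orthogonal_def\<close>)
  then have "z = 0" by (simp add: orthogonal_self)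
  then have y: "y = (\<Sum>j=1..?n. c j *\<^sub>R u j)" by (simp add: z_def)
  have "y \<bullet> y = y \<bullet> (\<Sum>j=1..?n. c j *\<^sub>R u j)" using y by simp
  also have "\<dots> = (\<Sum>j=1..?n. c j * (y \<bullet> u j))" by (simp add: inner_sum_right)
  also have "\<dots> = (\<Sum>j=1..?n. (y \<bullet> u j)\<^sup>2 / (u j \<bullet> u j))"
    by (simp add: c_def power2_eq_square)
  finally show ?thesis .
qed


lemma A1: "d \<in> eigenvalues (H::real^'n^'n) \<Longrightarrow> \<exists>x. x \<noteq> 0 \<and> H *v x = d *s x"
  unfolding eigenvalues_def by blast
lemma A2: "H *v x = d *s x \<Longrightarrow> norm (H *v x) = \<bar>d\<bar> * norm (x::real^'n)" by (simp add: scalar_mult_eq_scaleR)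
lemma A3: "norm (y::real^'n) ^ 2 \<le> m * norm x ^ 2 \<Longrightarrow> norm y = \<bar>d\<bar> * norm x \<Longrightarrow> d ^ 2 * norm x ^ 2 \<le> m * norm x ^ 2"
  by (simp add: power_mult_distrib)
lemma A4: "(d::real) ^ 2 \<le> m \<Longrightarrow> \<bar>d\<bar> \<le> sqrt m"
  using real_sqrt_le_mono by fastforce


lemma quad_zero:
  fixes g b :: real
  assumes "\<And>t. 2 * t * g + t ^ 2 * b \<le> 0"
  shows "g = 0"
proof (rule ccontr)
  assume g: "g \<noteq> 0"
  define t where "t = g / (\<bar>b\<bar> + 1)"
  have pos: "\<bar>b\<bar> + 1 > 0" by simp
  have "2 * t * g + t ^ 2 * b \<le> 0" by (rule assms)
  then have "(2 * t * g + t ^ 2 * b) * (\<bar>b\<bar> + 1) ^ 2 \<le> 0"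
    by (simp add: mult_nonpos_nonneg)
  moreover have "(2 * t * g + t ^ 2 * b) * (\<bar>b\<bar> + 1) ^ 2 = g ^ 2 * (2 * (\<bar>b\<bar> + 1) + b)"
  proof -
    have tk: "t * (\<bar>b\<bar> + 1) = g" using pos unfolding t_def by simp
    have "(2 * t * g + t ^ 2 * b) * (\<bar>b\<bar> + 1) ^ 2 = 2 * g * (t * (\<bar>b\<bar> + 1)) * (\<bar>b\<bar> + 1) + (t * (\<bar>b\<bar> + 1)) ^ 2 * b"
      by (simp add: algebra_simps power2_eq_square)
    then show ?thesis unfolding tk by (simp add: algebra_simps power2_eq_square)
  qed
  moreover have "g ^ 2 * (2 * (\<bar>b\<bar> + 1) + b) > 0"
    using g by (intro mult_pos_pos) (auto simp: abs_if)
  ultimately show False by linarith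
qed

lemma spectral_norm_bound:
  fixes H :: "real^'n^'n"
  assumes sym: "transpose H = H"
  shows "\<forall>x. norm (H *v x) \<le> spectral_norm H * norm x" "0 \<le> spectral_norm H"
proof -
  let ?f = "\<lambda>x. (norm (H *v x)) ^ 2"
  have cont: "continuous_on (sphere (0::real^'n) 1) ?f"
    by (intro continuous_intros linear_continuous_on matrix_vector_mul_linear)
  obtain e1 :: "real^'n" where "norm e1 = 1" using vector_choose_size[of 1] by auto
  then have ne: "sphere (0::real^'n) 1 \<noteq> {}" by auto
  obtain x0 where x0: "x0 \<in> sphere 0 1" and mx: "\<And>y. y \<in> sphere 0 1 \<Longrightarrow> ?f y \<le> ?f x0"
    using continuous_attains_sup[OF compact_sphere ne cont] by blast
  define m where "m = ?f x0"
  have nx0: "norm x0 = 1" using x0 by simp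
  have xx0: "x0 \<bullet> x0 = 1" using nx0 by (metis power2_norm_eq_inner power_one)
  have m0: "m \<ge> 0" by (simp add: m_def)
  have bnd: "norm (H *v x) ^ 2 \<le> m * norm x ^ 2" for x
  proof (cases "x = 0")
    case True then show ?thesis by simp
  next
    case False
    then have "(inverse (norm x) *\<^sub>R x) \<in> sphere 0 1" by simp
    then have "?f (inverse (norm x) *\<^sub>R x) \<le> m" using mx m_def by blast
    then have "(inverse (norm x)) ^ 2 * norm (H *v x) ^ 2 \<le> m"
      by (simp add: matrix_vector_mult_scaleR power_mult_distrib)
    then show ?thesis using False
      by (simp add: field_simps power2_eq_square)
  qed
  have Hx0: "H *v (H *v x0) = m *\<^sub>R x0"
  proof -
    have g0: "(H *v x0) \<bullet> (H *v y) - m * (x0 \<bullet> y) = 0" for y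
    proof (rule quad_zero[where b = "(H *v y) \<bullet> (H *v y) - m * (y \<bullet> y)"])
      fix t :: real
      have "norm (H *v (x0 + t *\<^sub>R y)) ^ 2 \<le> m * norm (x0 + t *\<^sub>R y) ^ 2" by (rule bnd)
      moreover have "norm (H *v (x0 + t *\<^sub>R y)) ^ 2 = m + 2 * t * ((H *v x0) \<bullet> (H *v y)) + t ^ 2 * ((H *v y) \<bullet> (H *v y))"
        unfolding power2_norm_eq_inner m_def matrix_vector_right_distrib matrix_vector_mult_scaleR inner_expand ..
      moreover have "norm (x0 + t *\<^sub>R y) ^ 2 = 1 + 2 * t * (x0 \<bullet> y) + t ^ 2 * (y \<bullet> y)"
        using xx0 unfolding power2_norm_eq_inner inner_expand by simp
      ultimately have "m + 2 * t * ((H *v x0) \<bullet> (H *v y)) + t ^ 2 * ((H *v y) \<bullet> (H *v y)) \<le> m * (1 + 2 * t * (x0 \<bullet> y) + t ^ 2 * (y \<bullet> y))"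
        by simp
      moreover have "m * (1 + 2 * t * (x0 \<bullet> y) + t ^ 2 * (y \<bullet> y)) = m + 2 * t * (m * (x0 \<bullet> y)) + t ^ 2 * (m * (y \<bullet> y))"
        by (simp add: distrib_left)
      moreover have "2 * t * ((H *v x0) \<bullet> (H *v y) - m * (x0 \<bullet> y)) + t ^ 2 * ((H *v y) \<bullet> (H *v y) - m * (y \<bullet> y))
         = 2 * t * ((H *v x0) \<bullet> (H *v y)) + t ^ 2 * ((H *v y) \<bullet> (H *v y)) - (2 * t * (m * (x0 \<bullet> y)) + t ^ 2 * (m * (y \<bullet> y)))"
        by (simp add: right_diff_distrib)
      ultimately show "2 * t * ((H *v x0) \<bullet> (H *v y) - m * (x0 \<bullet> y)) + t ^ 2 * ((H *v y) \<bullet> (H *v y) - m * (y \<bullet> y)) \<le> 0"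
        by linarith
    qed
    define w where "w = H *v (H *v x0) - m *\<^sub>R x0"
    have "w \<bullet> y = 0" for y
      using g0[of y] sym_dot[OF sym, of "H *v x0" y] by (simp add: w_def inner_diff_left)
    then have "w \<bullet> w = 0" by blast
    then show ?thesis by (simp add: w_def)
  qed
  define s where "s = sqrt m"
  have s0: "s \<ge> 0" and ss: "s * s = m" using m0 by (auto simp: s_def)
  have "x0 \<noteq> 0" using nx0 by auto
  obtain c where c: "c \<in> eigenvalues H" "\<bar>c\<bar> = s"
  proof (cases "H *v x0 + s *\<^sub>R x0 = 0")
    case True
    then have "H *v x0 = (- s) *s x0" by (simp add: scalar_mult_eq_scaleR eq_neg_iff_add_eq_0)
    then have "- s \<in> eigenvalues H" using \<open>x0 \<noteq> 0\<close> unfolding eigenvalues_def by blast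
    then show ?thesis using that s0 by force
  next
    case False
    define w where "w = H *v x0 + s *\<^sub>R x0"
    have "H *v w = s *s w" unfolding w_def
      using Hx0 ss by (simp add: matrix_vector_right_distrib matrix_vector_mult_scaleR scalar_mult_eq_scaleR algebra_simps)
    then have "s \<in> eigenvalues H" using False unfolding eigenvalues_def w_def by blast
    then show ?thesis using that s0 by force
  qed
  have le: "\<bar>d\<bar> \<le> s" if dH: "d \<in> eigenvalues H" for d
  proof -
    obtain x where x: "x \<noteq> 0" "H *v x = d *s x" using A1[OF dH] by blast
    have nH: "norm (H *v x) = \<bar>d\<bar> * norm x" using A2[OF x(2)] .
    have "d ^ 2 * norm x ^ 2 \<le> m * norm x ^ 2" using A3[OF bnd[of x] nH] .
    moreover have "norm x ^ 2 > 0" using x(1) by simp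
    ultimately have "d ^ 2 \<le> m" by (rule mult_right_le_imp_le)
    then show ?thesis unfolding s_def by (rule A4)
  qed
  have fin: "finite (eigenvalues H)"
  proof -
    define e where "e d = (SOME x. x \<noteq> 0 \<and> H *v x = d *s x)" for d
    have e: "e d \<noteq> 0 \<and> H *v e d = d *s e d" if "d \<in> eigenvalues H" for d
    proof -
      have "\<exists>x. x \<noteq> 0 \<and> H *v x = d *s x" using that unfolding eigenvalues_def by simp
      then show ?thesis unfolding e_def by (rule someI_ex)
    qed
    have inj: "inj_on e (eigenvalues H)"
    proof (rule inj_onI)
      fix a b assume ab: "a \<in> eigenvalues H" "b \<in> eigenvalues H" "e a = e b"
      have "a *s e a = H *v e a" using e[OF ab(1)] by simp
      also have "\<dots> = H *v e b" using ab(3) by simp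
      also have "\<dots> = b *s e b" using e[OF ab(2)] by simp
      also have "\<dots> = b *s e a" using ab(3) by simp
      finally have "a *s e a = b *s e a" .
      then show "a = b" using e[OF ab(1)] vec.scale_cancel_right by blast
    qed
    have po: "pairwise orthogonal (e ` eigenvalues H)"
    proof (rule pairwiseI)
      fix x y assume xy: "x \<in> e ` eigenvalues H" "y \<in> e ` eigenvalues H" "x \<noteq> y"
      then obtain a b where ab: "a \<in> eigenvalues H" "b \<in> eigenvalues H" "x = e a" "y = e b" by blast
      have "a \<noteq> b" using xy(3) ab(3,4) by blast
      have "e a \<bullet> e b = 0"
        by (rule sym_orth[OF sym conjunct2[OF e[OF ab(1)]] conjunct2[OF e[OF ab(2)]] \<open>a \<noteq> b\<close>])
      then show "orthogonal x y" unfolding orthogonal_def ab(3,4) .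
    qed
    have "0 \<notin> e ` eigenvalues H"
    proof
      assume "0 \<in> e ` eigenvalues H"
      then obtain a where "0 = e a" "a \<in> eigenvalues H" by (rule imageE)
      then show False using e[of a] by simp
    qed
    then have "independent (e ` eigenvalues H)" using po pairwise_orthogonal_independent by blast
    then have "finite (e ` eigenvalues H)" using independent_bound by blast
    then show ?thesis using inj finite_imageD by blast
  qed
  have sn: "spectral_norm H = s"
    unfolding spectral_norm_def
  proof (rule Max_eqI)
    show "finite (abs ` eigenvalues H)" using fin by (rule finite_imageI)
    fix y assume "y \<in> abs ` eigenvalues H"
    then obtain d where "y = \<bar>d\<bar>" "d \<in> eigenvalues H" by (rule imageE)
    then show "y \<le> s" using le by simp
  next
    show "s \<in> abs ` eigenvalues H" using c(1) c(2)[symmetric] by (rule rev_image_eqI)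
  qed
  show "\<forall>x. norm (H *v x) \<le> spectral_norm H * norm x"
  proof
    fix x :: "real^'n"
    have "(s * norm x) ^ 2 = m * norm x ^ 2" using ss by (simp add: power_mult_distrib power2_eq_square)
    then have "norm (H *v x) ^ 2 \<le> (s * norm x) ^ 2" using bnd[of x] by simp
    moreover have "0 \<le> s * norm x" using s0 by simp
    ultimately have "norm (H *v x) \<le> s * norm x" by (rule power2_le_imp_le)
    then show "norm (H *v x) \<le> spectral_norm H * norm x" unfolding sn .
  qed
  show "0 \<le> spectral_norm H" unfolding sn by (rule s0)
qed



lemma eig_expand:
  fixes A :: "real^'n^'n" and u :: "nat \<Rightarrow> real^'n"
  assumes sym: "transpose A = A"
    and eig: "\<And>j. 1 \<le> j \<Longrightarrow> j \<le> CARD('n) \<Longrightarrow> u j \<noteq> 0 \<and> A *v u j = a j *s u j"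
    and orth: "\<And>i j. 1 \<le> i \<Longrightarrow> i \<le> CARD('n) \<Longrightarrow> 1 \<le> j \<Longrightarrow> j \<le> CARD('n) \<Longrightarrow> i \<noteq> j \<Longrightarrow> u i \<bullet> u j = 0"
  shows "norm (A *v x) ^ 2 = (\<Sum>j=1..CARD('n). (a j) ^ 2 * ((x \<bullet> u j) ^ 2 / (u j \<bullet> u j)))"
    and "norm x ^ 2 = (\<Sum>j=1..CARD('n). (x \<bullet> u j) ^ 2 / (u j \<bullet> u j))"
proof -
  have nz: "\<And>j. 1 \<le> j \<Longrightarrow> j \<le> CARD('n) \<Longrightarrow> u j \<noteq> 0" using eig by blast
  have P: "y \<bullet> y = (\<Sum>j=1..CARD('n). (y \<bullet> u j)\<^sup>2 / (u j \<bullet> u j))" for y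
    by (rule parseval[OF nz orth])
  have "norm (A *v x) ^ 2 = (A *v x) \<bullet> (A *v x)" by (simp add: power2_norm_eq_inner)
  also have "\<dots> = (\<Sum>j=1..CARD('n). ((A *v x) \<bullet> u j)\<^sup>2 / (u j \<bullet> u j))" by (rule P)
  also have "\<dots> = (\<Sum>j=1..CARD('n). (a j) ^ 2 * ((x \<bullet> u j) ^ 2 / (u j \<bullet> u j)))"
  proof (rule sum.cong[OF refl])
    fix j assume "j \<in> {1..CARD('n)}"
    then have "A *v u j = a j *s u j" using eig by auto
    then have "(A *v x) \<bullet> u j = a j * (x \<bullet> u j)"
      using sym_dot[OF sym, of x "u j"] by (simp add: scalar_mult_eq_scaleR)
    then show "((A *v x) \<bullet> u j)\<^sup>2 / (u j \<bullet> u j) = (a j) ^ 2 * ((x \<bullet> u j) ^ 2 / (u j \<bullet> u j))"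
      by (simp add: power_mult_distrib)
  qed
  finally show "norm (A *v x) ^ 2 = (\<Sum>j=1..CARD('n). (a j) ^ 2 * ((x \<bullet> u j) ^ 2 / (u j \<bullet> u j)))" .
  show "norm x ^ 2 = (\<Sum>j=1..CARD('n). (x \<bullet> u j) ^ 2 / (u j \<bullet> u j))"
    using P[of x] by (simp add: power2_norm_eq_inner)
qed

lemma weyl_half:
  fixes A B :: "real^'n^'n" and u v :: "nat \<Rightarrow> real^'n" and a b :: "nat \<Rightarrow> real"
  assumes symA: "transpose A = A" and symB: "transpose B = B"
    and eigA: "\<And>j. 1 \<le> j \<Longrightarrow> j \<le> CARD('n) \<Longrightarrow> u j \<noteq> 0 \<and> A *v u j = a j *s u j"
    and orthA: "\<And>i j. 1 \<le> i \<Longrightarrow> i \<le> CARD('n) \<Longrightarrow> 1 \<le> j \<Longrightarrow> j \<le> CARD('n) \<Longrightarrow> i \<noteq> j \<Longrightarrow> u i \<bullet> u j = 0"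
    and eigB: "\<And>j. 1 \<le> j \<Longrightarrow> j \<le> CARD('n) \<Longrightarrow> v j \<noteq> 0 \<and> B *v v j = b j *s v j"
    and orthB: "\<And>i j. 1 \<le> i \<Longrightarrow> i \<le> CARD('n) \<Longrightarrow> 1 \<le> j \<Longrightarrow> j \<le> CARD('n) \<Longrightarrow> i \<noteq> j \<Longrightarrow> v i \<bullet> v j = 0"
    and monA: "\<And>j k. 1 \<le> j \<Longrightarrow> j \<le> k \<Longrightarrow> k \<le> CARD('n) \<Longrightarrow> (a k) ^ 2 \<le> (a j) ^ 2"
    and monB: "\<And>j k. 1 \<le> j \<Longrightarrow> j \<le> k \<Longrightarrow> k \<le> CARD('n) \<Longrightarrow> (b k) ^ 2 \<le> (b j) ^ 2"
    and cmp: "\<And>x. norm (B *v x) ^ 2 \<le> norm (A *v x) ^ 2 + e * norm x ^ 2"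
    and i: "1 \<le> i" "i \<le> CARD('n)"
  shows "(b i) ^ 2 \<le> (a i) ^ 2 + e"
proof -
  let ?n = "CARD('n)"
  define W where "W = u ` {1..<i} \<union> v ` {i<..?n}"
  have finW: "finite W" by (simp add: W_def)
  have "card W \<le> card (u ` {1..<i}) + card (v ` {i<..?n})" unfolding W_def by (rule card_Un_le)
  also have "\<dots> \<le> card {1..<i} + card {i<..?n}" by (intro add_mono card_image_le) auto
  also have "\<dots> < ?n" using i by simp
  finally have dW: "dim W < DIM(real^'n)" using dim_le_card'[OF finW] by simp
  then obtain x :: "real^'n" where x0: "x \<noteq> 0" and xo: "\<And>y. y \<in> span W \<Longrightarrow> orthogonal x y"
    using orthogonal_to_subspace_exists[OF dW] by blast
  have xu: "x \<bullet> u k = 0" if "1 \<le> k" "k < i" for k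
    using xo[of "u k"] that span_base[of "u k" W] unfolding W_def orthogonal_def by auto
  have xv: "x \<bullet> v k = 0" if "i < k" "k \<le> ?n" for k
    using xo[of "v k"] that span_base[of "v k" W] unfolding W_def orthogonal_def by auto
  have EA1: "norm (A *v x) ^ 2 = (\<Sum>j=1..CARD('n). (a j) ^ 2 * ((x \<bullet> u j) ^ 2 / (u j \<bullet> u j)))"
    by (rule eig_expand(1)) (fact symA, (fact eigA)+, (fact orthA)+)
  have EA2: "norm x ^ 2 = (\<Sum>j=1..CARD('n). (x \<bullet> u j) ^ 2 / (u j \<bullet> u j))"
    by (rule eig_expand(2)) (fact symA, (fact eigA)+, (fact orthA)+)
  have EB1: "norm (B *v x) ^ 2 = (\<Sum>j=1..CARD('n). (b j) ^ 2 * ((x \<bullet> v j) ^ 2 / (v j \<bullet> v j)))"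
    by (rule eig_expand(1)) (fact symB, (fact eigB)+, (fact orthB)+)
  have EB2: "norm x ^ 2 = (\<Sum>j=1..CARD('n). (x \<bullet> v j) ^ 2 / (v j \<bullet> v j))"
    by (rule eig_expand(2)) (fact symB, (fact eigB)+, (fact orthB)+)
  have "norm (A *v x) ^ 2 = (\<Sum>j=1..?n. (a j) ^ 2 * ((x \<bullet> u j) ^ 2 / (u j \<bullet> u j)))" by (rule EA1)
  also have "\<dots> \<le> (\<Sum>j=1..?n. (a i) ^ 2 * ((x \<bullet> u j) ^ 2 / (u j \<bullet> u j)))"
  proof (rule sum_mono)
    fix j assume j: "j \<in> {1..?n}"
    show "(a j) ^ 2 * ((x \<bullet> u j) ^ 2 / (u j \<bullet> u j)) \<le> (a i) ^ 2 * ((x \<bullet> u j) ^ 2 / (u j \<bullet> u j))"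
    proof (cases "j < i")
      case True then show ?thesis using xu[of j] j by simp
    next
      case False
      then have "(a j) ^ 2 \<le> (a i) ^ 2" using monA[of i j] i j by simp
      then show ?thesis by (rule mult_right_mono) simp
    qed
  qed
  also have "\<dots> = (a i) ^ 2 * norm x ^ 2" using EA2 by (simp only: sum_distrib_left)
  finally have XA: "norm (A *v x) ^ 2 \<le> (a i) ^ 2 * norm x ^ 2" .
  have "(b i) ^ 2 * norm x ^ 2 = (\<Sum>j=1..?n. (b i) ^ 2 * ((x \<bullet> v j) ^ 2 / (v j \<bullet> v j)))"
    using EB2 by (simp only: sum_distrib_left)
  also have "\<dots> \<le> (\<Sum>j=1..?n. (b j) ^ 2 * ((x \<bullet> v j) ^ 2 / (v j \<bullet> v j)))"
  proof (rule sum_mono)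
    fix j assume j: "j \<in> {1..?n}"
    show "(b i) ^ 2 * ((x \<bullet> v j) ^ 2 / (v j \<bullet> v j)) \<le> (b j) ^ 2 * ((x \<bullet> v j) ^ 2 / (v j \<bullet> v j))"
    proof (cases "i < j")
      case True then show ?thesis using xv[of j] j by simp
    next
      case False
      then have "(b i) ^ 2 \<le> (b j) ^ 2" using monB[of j i] i j by simp
      then show ?thesis by (rule mult_right_mono) simp
    qed
  qed
  also have "\<dots> = norm (B *v x) ^ 2" by (rule EB1[symmetric])
  finally have XB: "(b i) ^ 2 * norm x ^ 2 \<le> norm (B *v x) ^ 2" .
  have "(b i) ^ 2 * norm x ^ 2 \<le> ((a i) ^ 2 + e) * norm x ^ 2"
    using XA XB cmp[of x] by (simp add: distrib_right)
  moreover have "norm x ^ 2 > 0" using x0 by simp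
  ultimately show ?thesis by (rule mult_right_le_imp_le)
qed



lemma r1:
  fixes p q r l \<epsilon> :: real
  assumes "0 \<le> p" "0 \<le> q" "0 \<le> \<epsilon>" "0 \<le> r" "r \<le> p + \<epsilon> * q" "p \<le> l * q"
  shows "r ^ 2 \<le> p ^ 2 + \<epsilon> * (\<epsilon> + 2 * l) * q ^ 2"
proof -
  have h1: "r ^ 2 \<le> (p + \<epsilon> * q) ^ 2" using assms by (intro power_mono) auto
  have h2: "(p + \<epsilon> * q) ^ 2 = p ^ 2 + 2 * (\<epsilon> * q * p) + \<epsilon> ^ 2 * q ^ 2" by (simp add: power2_eq_square algebra_simps)
  have h3: "\<epsilon> * q * p \<le> \<epsilon> * q * (l * q)" using assms by (intro mult_left_mono) auto
  have h4: "p ^ 2 + \<epsilon> * (\<epsilon> + 2 * l) * q ^ 2 = p ^ 2 + 2 * (\<epsilon> * q * (l * q)) + \<epsilon> ^ 2 * q ^ 2"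
    by (simp add: power2_eq_square algebra_simps)
  show ?thesis using h1 h2 h3 h4 by linarith
qed

lemma r2:
  fixes p q r l \<epsilon> :: real
  assumes "0 \<le> p" "0 \<le> q" "0 \<le> \<epsilon>" "0 \<le> r" "0 \<le> l" "p \<le> r + \<epsilon> * q" "p \<le> l * q"
  shows "p ^ 2 \<le> r ^ 2 + \<epsilon> * (\<epsilon> + 2 * l) * q ^ 2"
proof -
  have h0: "0 \<le> \<epsilon> * (\<epsilon> + 2 * l) * q ^ 2" using assms by simp
  show ?thesis
  proof (cases "p \<le> r")
    case True
    have "p ^ 2 \<le> r ^ 2" using True assms by (intro power_mono) auto
    then show ?thesis using h0 by linarith
  next
    case False
    have h1: "p ^ 2 - r ^ 2 = (p - r) * (p + r)" by (simp add: power2_eq_square algebra_simps)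
    have h2: "(p - r) * (p + r) \<le> (\<epsilon> * q) * (2 * (l * q))"
      using False assms by (intro mult_mono) auto
    have h3: "(\<epsilon> * q) * (2 * (l * q)) \<le> \<epsilon> * (\<epsilon> + 2 * l) * q ^ 2"
    proof -
      have "\<epsilon> * (\<epsilon> + 2 * l) * q ^ 2 = (\<epsilon> * q) * (2 * (l * q)) + (\<epsilon> * q) ^ 2"
        by (simp add: power2_eq_square algebra_simps)
      then show ?thesis by simp
    qed
    show ?thesis using h1 h2 h3 by linarith
  qed
qed



theorem theorem5p9:
  fixes M H :: "real^'n^'n"
    and lam nu :: "nat \<Rightarrow> real"
    and u v :: "nat \<Rightarrow> real^'n"
  defines "n \<equiv> CARD('n)"
  assumes symM: "transpose M = M"
    and symMH: "transpose (M + H) = M + H"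
    and specM: "eigenvalues M = lam ` {1..n}"
    and ordM: "\<And>i j. 1 \<le> i \<Longrightarrow> i < j \<Longrightarrow> j \<le> n \<Longrightarrow> \<bar>lam i\<bar> > \<bar>lam j\<bar>"
    and specMH: "eigenvalues (M + H) = nu ` {1..n}"
    and ordMH: "\<And>i j. 1 \<le> i \<Longrightarrow> i < j \<Longrightarrow> j \<le> n \<Longrightarrow> \<bar>nu i\<bar> > \<bar>nu j\<bar>"
    and eigu: "\<And>i. 1 \<le> i \<Longrightarrow> i \<le> n \<Longrightarrow> u i \<noteq> 0 \<and> M *v u i = lam i *s u i"
    and eigv: "\<And>i. 1 \<le> i \<Longrightarrow> i \<le> n \<Longrightarrow> v i \<noteq> 0 \<and> (M + H) *v v i = nu i *s v i"
  shows "\<forall>i\<in>{1..n}.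
           \<bar>(lam i)\<^sup>2 - (nu i)\<^sup>2\<bar> \<le> spectral_norm H * (spectral_norm H + 2 * \<bar>lam 1\<bar>)
         \<and> (let \<Delta> = Min {\<bar>(lam i)\<^sup>2 - (nu j)\<^sup>2\<bar> | j. j \<in> {1..n} \<and> j \<noteq> i}
            in n \<ge> 2 \<and> \<Delta> > 0 \<longrightarrow>
               sin (line_angle (u i) (v i))
                 \<le> spectral_norm H * (spectral_norm H + 2 * \<bar>lam 1\<bar>) / \<Delta>)"
proof -
  define N where "N = M + H"
  define \<epsilon> where "\<epsilon> = spectral_norm H"
  define l where "l = \<bar>lam 1\<bar>"
  define e where "e = \<epsilon> * (\<epsilon> + 2 * l)"
  have n1: "1 \<le> n" unfolding n_def by (simp add: Suc_leI)
  have symN: "transpose N = N" using symMH by (simp add: N_def)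
  have tadd: "transpose (M + H) = transpose M + transpose H" by (simp add: transpose_def vec_eq_iff)
  have "M + transpose H = M + H" using symMH unfolding tadd symM .
  then have symH: "transpose H = H" by simp
  have hb: "\<And>x. norm (H *v x) \<le> \<epsilon> * norm x" using spectral_norm_bound(1)[OF symH] by (simp add: \<epsilon>_def)
  have e0: "0 \<le> \<epsilon>" using spectral_norm_bound(2)[OF symH] by (simp add: \<epsilon>_def)
  have l0: "0 \<le> l" by (simp add: l_def)
  have eU: "\<And>j. 1 \<le> j \<Longrightarrow> j \<le> CARD('n) \<Longrightarrow> u j \<noteq> 0 \<and> M *v u j = lam j *s u j"
    using eigu unfolding n_def by blast
  have eV: "\<And>j. 1 \<le> j \<Longrightarrow> j \<le> CARD('n) \<Longrightarrow> v j \<noteq> 0 \<and> N *v v j = nu j *s v j"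
    using eigv unfolding n_def N_def by blast
  have oU: "\<And>i j. 1 \<le> i \<Longrightarrow> i \<le> CARD('n) \<Longrightarrow> 1 \<le> j \<Longrightarrow> j \<le> CARD('n) \<Longrightarrow> i \<noteq> j \<Longrightarrow> u i \<bullet> u j = 0"
  proof -
    fix i j assume ij: "1 \<le> i" "i \<le> CARD('n)" "1 \<le> j" "j \<le> CARD('n)" "i \<noteq> j"
    have "\<bar>lam i\<bar> \<noteq> \<bar>lam j\<bar>"
    proof (cases "i < j")
      case True then show ?thesis using ordM[of i j] ij unfolding n_def by simp
    next
      case False then have "j < i" using ij by simp
      then show ?thesis using ordM[of j i] ij unfolding n_def by simp
    qed
    then have "lam i \<noteq> lam j" by auto
    then show "u i \<bullet> u j = 0"
      using sym_orth[OF symM conjunct2[OF eU[OF ij(1,2)]] conjunct2[OF eU[OF ij(3,4)]]] by blast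
  qed
  have oV: "\<And>i j. 1 \<le> i \<Longrightarrow> i \<le> CARD('n) \<Longrightarrow> 1 \<le> j \<Longrightarrow> j \<le> CARD('n) \<Longrightarrow> i \<noteq> j \<Longrightarrow> v i \<bullet> v j = 0"
  proof -
    fix i j assume ij: "1 \<le> i" "i \<le> CARD('n)" "1 \<le> j" "j \<le> CARD('n)" "i \<noteq> j"
    have "\<bar>nu i\<bar> \<noteq> \<bar>nu j\<bar>"
    proof (cases "i < j")
      case True then show ?thesis using ordMH[of i j] ij unfolding n_def by simp
    next
      case False then have "j < i" using ij by simp
      then show ?thesis using ordMH[of j i] ij unfolding n_def by simp
    qed
    then have "nu i \<noteq> nu j" by auto
    then show "v i \<bullet> v j = 0"
      using sym_orth[OF symN conjunct2[OF eV[OF ij(1,2)]] conjunct2[OF eV[OF ij(3,4)]]] by blast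
  qed
  have monU: "\<And>j k. 1 \<le> j \<Longrightarrow> j \<le> k \<Longrightarrow> k \<le> CARD('n) \<Longrightarrow> (lam k) ^ 2 \<le> (lam j) ^ 2"
  proof -
    fix j k :: nat assume jk: "1 \<le> j" "j \<le> k" "k \<le> CARD('n)"
    have "\<bar>lam k\<bar> \<le> \<bar>lam j\<bar>"
    proof (cases "j = k")
      case False then show ?thesis using ordM[of j k] jk unfolding n_def by simp
    qed simp
    then show "(lam k) ^ 2 \<le> (lam j) ^ 2" by (simp add: abs_le_square_iff)
  qed
  have monV: "\<And>j k. 1 \<le> j \<Longrightarrow> j \<le> k \<Longrightarrow> k \<le> CARD('n) \<Longrightarrow> (nu k) ^ 2 \<le> (nu j) ^ 2"
  proof -
    fix j k :: nat assume jk: "1 \<le> j" "j \<le> k" "k \<le> CARD('n)"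
    have "\<bar>nu k\<bar> \<le> \<bar>nu j\<bar>"
    proof (cases "j = k")
      case False then show ?thesis using ordMH[of j k] jk unfolding n_def by simp
    qed simp
    then show "(nu k) ^ 2 \<le> (nu j) ^ 2" by (simp add: abs_le_square_iff)
  qed
  have Mb: "norm (M *v x) \<le> l * norm x" for x
  proof -
    have E1: "norm (M *v x) ^ 2 = (\<Sum>j=1..CARD('n). (lam j) ^ 2 * ((x \<bullet> u j) ^ 2 / (u j \<bullet> u j)))"
      by (rule eig_expand(1)) (fact symM, (fact eU)+, (fact oU)+)
    have E2: "norm x ^ 2 = (\<Sum>j=1..CARD('n). (x \<bullet> u j) ^ 2 / (u j \<bullet> u j))"
      by (rule eig_expand(2)) (fact symM, (fact eU)+, (fact oU)+)
    have "norm (M *v x) ^ 2 \<le> (\<Sum>j=1..CARD('n). l ^ 2 * ((x \<bullet> u j) ^ 2 / (u j \<bullet> u j)))"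
      unfolding E1
    proof (rule sum_mono)
      fix j assume "j \<in> {1..CARD('n)}"
      then have "(lam j) ^ 2 \<le> l ^ 2" using monU[of 1 j] by (simp add: l_def)
      then show "(lam j) ^ 2 * ((x \<bullet> u j) ^ 2 / (u j \<bullet> u j)) \<le> l ^ 2 * ((x \<bullet> u j) ^ 2 / (u j \<bullet> u j))"
        by (rule mult_right_mono) simp
    qed
    also have "\<dots> = (l * norm x) ^ 2" using E2 by (simp only: sum_distrib_left power_mult_distrib)
    finally have "norm (M *v x) ^ 2 \<le> (l * norm x) ^ 2" .
    moreover have "0 \<le> l * norm x" using l0 by simp
    ultimately show ?thesis by (rule power2_le_imp_le)
  qed
  have Nx: "N *v x = M *v x + H *v x" for x by (simp add: N_def matrix_vector_mult_add_rdistrib)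
  have Nb: "norm (N *v x) \<le> norm (M *v x) + \<epsilon> * norm x" for x
    using norm_triangle_ineq[of "M *v x" "H *v x"] hb[of x] unfolding Nx by linarith
  have Nb2: "norm (N *v x) \<le> (l + \<epsilon>) * norm x" for x
    using Nb[of x] Mb[of x] by (simp add: distrib_right)
  have cmp1: "norm (N *v x) ^ 2 \<le> norm (M *v x) ^ 2 + e * norm x ^ 2" for x
    unfolding e_def by (rule r1) (use Nb Mb e0 in auto)
  have cmp2: "norm (M *v x) ^ 2 \<le> norm (N *v x) ^ 2 + e * norm x ^ 2" for x
  proof -
    have "M *v x = N *v x - H *v x" unfolding Nx by simp
    then have "norm (M *v x) \<le> norm (N *v x) + norm (H *v x)" using norm_triangle_ineq4 by metis
    then have "norm (M *v x) \<le> norm (N *v x) + \<epsilon> * norm x" using hb[of x] by linarith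
    then show ?thesis unfolding e_def by (intro r2) (use Mb e0 l0 in auto)
  qed
  show ?thesis
  proof
    fix i assume iR: "i \<in> {1..n}"
    then have i1: "1 \<le> i" and iN: "i \<le> CARD('n)" by (auto simp: n_def)
    have w1: "(nu i) ^ 2 \<le> (lam i) ^ 2 + e"
      by (rule weyl_half[where A=M and B=N and u=u and v=v])
         (fact symM symN i1 iN cmp1 eU eV oU oV monU monV)+
    have w2: "(lam i) ^ 2 \<le> (nu i) ^ 2 + e"
      by (rule weyl_half[where A=N and B=M and u=v and v=u])
         (fact symM symN i1 iN cmp2 eU eV oU oV monU monV)+
    have P1: "\<bar>(lam i)\<^sup>2 - (nu i)\<^sup>2\<bar> \<le> e" using w1 w2 by (simp add: abs_le_iff)
    define \<Delta> where "\<Delta> = Min {\<bar>(lam i)\<^sup>2 - (nu j)\<^sup>2\<bar> | j. j \<in> {1..n} \<and> j \<noteq> i}"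
    have P2: "sin (line_angle (u i) (v i)) \<le> e / \<Delta>" if n2: "n \<ge> 2" and D0: "\<Delta> > 0"
    proof -
      define uu where "uu = u i"
      define vv where "vv = v i"
      have uu0: "uu \<noteq> 0" and Mu: "M *v uu = lam i *s uu" using eU[OF i1 iN] by (auto simp: uu_def)
      have vv0: "vv \<noteq> 0" using eV[OF i1 iN] by (auto simp: vv_def)
      define y where "y = N *v (N *v uu) - (lam i) ^ 2 *\<^sub>R uu"
      have Nu: "N *v uu = lam i *\<^sub>R uu + H *v uu" using Mu unfolding Nx by (simp add: scalar_mult_eq_scaleR)
      have "N *v (N *v uu) = N *v (lam i *\<^sub>R uu) + N *v (H *v uu)"
        by (simp only: Nu matrix_vector_right_distrib)
      also have "N *v (lam i *\<^sub>R uu) = lam i *\<^sub>R (lam i *\<^sub>R uu + H *v uu)"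
        unfolding matrix_vector_mult_scaleR Nu ..
      finally have NNu: "N *v (N *v uu) = lam i *\<^sub>R (lam i *\<^sub>R uu + H *v uu) + N *v (H *v uu)" .
      have hy: "y = lam i *\<^sub>R (H *v uu) + N *v (H *v uu)"
        unfolding y_def NNu by (simp add: algebra_simps power2_eq_square)
      have ny: "norm y \<le> e * norm uu"
      proof -
        have "norm y \<le> norm (lam i *\<^sub>R (H *v uu)) + norm (N *v (H *v uu))"
          unfolding hy by (rule norm_triangle_ineq)
        also have "norm (lam i *\<^sub>R (H *v uu)) \<le> l * (\<epsilon> * norm uu)"
        proof -
          have "\<bar>lam i\<bar> \<le> l" using monU[of 1 i] i1 iN by (simp add: l_def abs_le_square_iff)
          then show ?thesis using hb[of uu] by (simp add: mult_mono e0 l0)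
        qed
        also have "norm (N *v (H *v uu)) \<le> (l + \<epsilon>) * (\<epsilon> * norm uu)"
          using Nb2[of "H *v uu"] hb[of uu] by (meson l0 e0 add_nonneg_nonneg mult_left_mono order_trans)
        finally show ?thesis by (simp add: e_def algebra_simps)
      qed
      have yv: "y \<bullet> v j = ((nu j) ^ 2 - (lam i) ^ 2) * (uu \<bullet> v j)" if j: "j \<in> {1..CARD('n)}" for j
      proof -
        have Nv: "N *v v j = nu j *\<^sub>R v j" using eV[of j] j by (simp add: scalar_mult_eq_scaleR)
        have "(N *v (N *v uu)) \<bullet> v j = (N *v uu) \<bullet> (N *v v j)" by (rule sym_dot[OF symN])
        also have "\<dots> = nu j * ((N *v uu) \<bullet> v j)" unfolding Nv by simp
        also have "(N *v uu) \<bullet> v j = uu \<bullet> (N *v v j)" by (rule sym_dot[OF symN])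
        also have "\<dots> = nu j * (uu \<bullet> v j)" unfolding Nv by simp
        finally show ?thesis unfolding y_def by (simp add: inner_diff_left power2_eq_square algebra_simps)
      qed
      define d where "d j = (uu \<bullet> v j) ^ 2 / (v j \<bullet> v j)" for j
      have d0: "d j \<ge> 0" for j by (simp add: d_def)
      have Pu: "uu \<bullet> uu = (\<Sum>j=1..CARD('n). d j)"
        unfolding d_def by (rule parseval) (use eV oV in auto)
      have Py: "y \<bullet> y = (\<Sum>j=1..CARD('n). ((nu j) ^ 2 - (lam i) ^ 2) ^ 2 * d j)"
      proof -
        have "y \<bullet> y = (\<Sum>j=1..CARD('n). (y \<bullet> v j) ^ 2 / (v j \<bullet> v j))"
          by (rule parseval) (use eV oV in auto)
        also have "\<dots> = (\<Sum>j=1..CARD('n). ((nu j) ^ 2 - (lam i) ^ 2) ^ 2 * d j)"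
          by (rule sum.cong[OF refl]) (simp add: yv d_def power_mult_distrib)
        finally show ?thesis .
      qed
      let ?R = "{1..CARD('n)}"
      have iR': "i \<in> ?R" using i1 iN by simp
      have Dle: "\<Delta>\<^sup>2 \<le> ((nu j) ^ 2 - (lam i) ^ 2) ^ 2" if j: "j \<in> ?R - {i}" for j
      proof -
        have fin: "finite {\<bar>(lam i)\<^sup>2 - (nu j)\<^sup>2\<bar> | j. j \<in> {1..n} \<and> j \<noteq> i}"
          by (rule finite_image_set) simp
        have "\<Delta> \<le> \<bar>(lam i)\<^sup>2 - (nu j)\<^sup>2\<bar>" unfolding \<Delta>_def
          by (rule Min_le[OF fin]) (use j in \<open>auto simp: n_def\<close>)
        then have "\<Delta>\<^sup>2 \<le> \<bar>(lam i)\<^sup>2 - (nu j)\<^sup>2\<bar>\<^sup>2" using D0 by (intro power_mono) auto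
        then show ?thesis by (simp add: power2_commute)
      qed
      have "\<Delta>\<^sup>2 * (uu \<bullet> uu - d i) = (\<Sum>j\<in>?R - {i}. \<Delta>\<^sup>2 * d j)"
        unfolding Pu sum.remove[OF finite_atLeastAtMost iR'] by (simp add: sum_distrib_left)
      also have "\<dots> \<le> (\<Sum>j\<in>?R - {i}. ((nu j) ^ 2 - (lam i) ^ 2) ^ 2 * d j)"
        by (rule sum_mono) (use Dle d0 in \<open>auto intro: mult_right_mono\<close>)
      also have "\<dots> \<le> y \<bullet> y"
        unfolding Py sum.remove[OF finite_atLeastAtMost iR'] using d0[of i] by simp
      also have "\<dots> = norm y ^ 2" by (simp add: power2_norm_eq_inner)
      also have "\<dots> \<le> (e * norm uu) ^ 2" using ny by (intro power_mono) auto
      also have "\<dots> = e\<^sup>2 * (uu \<bullet> uu)" by (simp add: power_mult_distrib power2_norm_eq_inner)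
      finally have key: "\<Delta>\<^sup>2 * (uu \<bullet> uu - d i) \<le> e\<^sup>2 * (uu \<bullet> uu)" .
      define c where "c = \<bar>uu \<bullet> vv\<bar> / (norm uu * norm vv)"
      have c1: "\<bar>c\<bar> \<le> 1" using uu0 vv0 Cauchy_Schwarz_ineq2[of uu vv]
        by (simp add: c_def divide_le_eq_1)
      have U0: "uu \<bullet> uu > 0" using uu0 by simp
      have c2: "c\<^sup>2 = d i / (uu \<bullet> uu)"
        by (simp add: c_def d_def vv_def[symmetric] power_divide power_mult_distrib power2_norm_eq_inner)
      have "1 - c\<^sup>2 = (uu \<bullet> uu - d i) / (uu \<bullet> uu)" unfolding c2 using U0 by (simp add: field_simps)
      also have "\<dots> \<le> (e / \<Delta>)\<^sup>2" using key U0 D0 by (simp add: field_simps power_divide)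
      finally have "sqrt (1 - c\<^sup>2) \<le> sqrt ((e / \<Delta>)\<^sup>2)" by (rule real_sqrt_le_mono)
      also have "\<dots> = e / \<Delta>" using D0 e0 l0 by (simp add: e_def)
      finally show ?thesis
        unfolding line_angle_def uu_def[symmetric] vv_def[symmetric] c_def[symmetric]
        using sin_arccos_abs[OF c1] by simp
    qed
    show "\<bar>(lam i)\<^sup>2 - (nu i)\<^sup>2\<bar> \<le> spectral_norm H * (spectral_norm H + 2 * \<bar>lam 1\<bar>)
         \<and> (let \<Delta> = Min {\<bar>(lam i)\<^sup>2 - (nu j)\<^sup>2\<bar> | j. j \<in> {1..n} \<and> j \<noteq> i}
            in n \<ge> 2 \<and> \<Delta> > 0 \<longrightarrow>
               sin (line_angle (u i) (v i))
                 \<le> spectral_norm H * (spectral_norm H + 2 * \<bar>lam 1\<bar>) / \<Delta>)"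
    proof
      have eE: "e = spectral_norm H * (spectral_norm H + 2 * \<bar>lam 1\<bar>)" by (simp add: e_def \<epsilon>_def l_def)
      show "\<bar>(lam i)\<^sup>2 - (nu i)\<^sup>2\<bar> \<le> spectral_norm H * (spectral_norm H + 2 * \<bar>lam 1\<bar>)"
        using P1 unfolding eE .
      show "let \<Delta> = Min {\<bar>(lam i)\<^sup>2 - (nu j)\<^sup>2\<bar> | j. j \<in> {1..n} \<and> j \<noteq> i}
            in n \<ge> 2 \<and> \<Delta> > 0 \<longrightarrow>
               sin (line_angle (u i) (v i))
                 \<le> spectral_norm H * (spectral_norm H + 2 * \<bar>lam 1\<bar>) / \<Delta>"
        unfolding Let_def \<Delta>_def[symmetric] eE[symmetric] using P2 by blast
    qed
  qed
qed


end
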